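(* Let $\Sigma^*\to G$, $w\mapsto\overline w$, be a choice of generators for a group $G$, let $\#\notin\Sigma$, let $R\subset\Sigma^*$ be a regular combing, and suppose $M=\{u\#v\#w\mid u,v,w\in R,\ \overline u\,\overline v\,\overline w=1\}$ is context-free. Let $\mathcal G$ be a context-free grammar for $M$ in Chomsky normal form (all productions of the form $A\to BC$ or $A\to a$ with $A,B,C$ nonterminals and $a\in\Sigma\cup\{\#\}$) such that every production participates in some derivation of a word of $M$ and every nonterminal occurs in some production. Call a nonterminal $A$ of rank zero if no terminal word derivable from $A$ contains $\#$. Then there exist a constant $K'$ and a regular combing $R'\subset R$ such that every word of $M\cap (R'\#R'\#R')$ has a derivation in $\mathcal G$ in which each nonterminal of rank zero derives a subword of length at most $K'$.
   Context: A choice of generators for $G$ consists of a finite alphabet $\Sigma$ with formal inverses (a fixed-point-free involution $a\mapsto a^{-1}$ on $\Sigma$, extended by $(wv)^{-1}=v^{-1}w^{-1}$) and a surjective monoid homomorphism $\Sigma^*\to G$, $w\mapsto\overline w$, with $\overline{w^{-1}}=\overline w^{-1}$. A regular combing is a regular language $R\subset\Sigma^*$ mapping onto $G$. In a derivation of a terminal word, each occurrence of a nonterminal derives a subword of that word. *)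

theory Defs
  imports "HOL-Algebra.Group"
begin

definition regular_on :: "'a set \<Rightarrow> 'a list set \<Rightarrow> bool" where
  "regular_on \<Sigma> L \<longleftrightarrow>
     (\<exists>(Q::nat set) q0 (\<delta>::nat \<Rightarrow> 'a \<Rightarrow> nat) F.
        finite Q \<and> q0 \<in> Q \<and> (\<forall>q\<in>Q. \<forall>a\<in>\<Sigma>. \<delta> q a \<in> Q) \<and> F \<subseteq> Q \<and>
        L = {w \<in> lists \<Sigma>. foldl \<delta> q0 w \<in> F})"

definition word_inv :: "('a \<Rightarrow> 'a) \<Rightarrow> 'a list \<Rightarrow> 'a list" where
  "word_inv iv w = rev (map iv w)"

definition choice_of_generators ::
  "('g, 'b) monoid_scheme \<Rightarrow> 'a set \<Rightarrow> ('a \<Rightarrow> 'a) \<Rightarrow> ('a list \<Rightarrow> 'g) \<Rightarrow> bool" where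
  "choice_of_generators G \<Sigma> iv \<phi> \<longleftrightarrow>
     group G \<and> finite \<Sigma> \<and>
     (\<forall>a\<in>\<Sigma>. iv a \<in> \<Sigma> \<and> iv (iv a) = a \<and> iv a \<noteq> a) \<and>
     \<phi> [] = \<one>\<^bsub>G\<^esub> \<and>
     (\<forall>u\<in>lists \<Sigma>. \<forall>v\<in>lists \<Sigma>. \<phi> (u @ v) = \<phi> u \<otimes>\<^bsub>G\<^esub> \<phi> v) \<and>
     \<phi> ` lists \<Sigma> = carrier G \<and>
     (\<forall>w\<in>lists \<Sigma>. \<phi> (word_inv iv w) = inv\<^bsub>G\<^esub> (\<phi> w))"

definition regular_combing ::
  "('g, 'b) monoid_scheme \<Rightarrow> 'a set \<Rightarrow> ('a list \<Rightarrow> 'g) \<Rightarrow> 'a list set \<Rightarrow> bool" where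
  "regular_combing G \<Sigma> \<phi> R \<longleftrightarrow> R \<subseteq> lists \<Sigma> \<and> regular_on \<Sigma> R \<and> \<phi> ` R = carrier G"

definition word_problem_M ::
  "('g, 'b) monoid_scheme \<Rightarrow> ('a list \<Rightarrow> 'g) \<Rightarrow> 'a \<Rightarrow> 'a list set \<Rightarrow> 'a list set" where
  "word_problem_M G \<phi> h R =
     {u @ [h] @ v @ [h] @ w | u v w. u \<in> R \<and> v \<in> R \<and> w \<in> R \<and>
        \<phi> u \<otimes>\<^bsub>G\<^esub> \<phi> v \<otimes>\<^bsub>G\<^esub> \<phi> w = \<one>\<^bsub>G\<^esub>}"

definition three_concat :: "'a \<Rightarrow> 'a list set \<Rightarrow> 'a list set" where
  "three_concat h R = {u @ [h] @ v @ [h] @ w | u v w. u \<in> R \<and> v \<in> R \<and> w \<in> R}"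

text \<open>A derivation of a terminal word is represented by its parse tree; each node
  is an occurrence of a nonterminal deriving the yield of its subtree.\<close>

datatype ('n, 't) ptree = Leaf 'n 't | Node 'n "('n, 't) ptree" "('n, 't) ptree"

fun root :: "('n, 't) ptree \<Rightarrow> 'n" where
  "root (Leaf A a) = A"
| "root (Node A l r) = A"

fun yield :: "('n, 't) ptree \<Rightarrow> 't list" where
  "yield (Leaf A a) = [a]"
| "yield (Node A l r) = yield l @ yield r"

fun subtrees :: "('n, 't) ptree \<Rightarrow> ('n, 't) ptree set" where
  "subtrees (Leaf A a) = {Leaf A a}"
| "subtrees (Node A l r) = insert (Node A l r) (subtrees l \<union> subtrees r)"

fun valid_tree :: "('n \<times> 'n \<times> 'n) set \<Rightarrow> ('n \<times> 't) set \<Rightarrow> ('n, 't) ptree \<Rightarrow> bool" where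
  "valid_tree P2 P1 (Leaf A a) \<longleftrightarrow> (A, a) \<in> P1"
| "valid_tree P2 P1 (Node A l r) \<longleftrightarrow>
     (A, root l, root r) \<in> P2 \<and> valid_tree P2 P1 l \<and> valid_tree P2 P1 r"

definition lang_from :: "('n \<times> 'n \<times> 'n) set \<Rightarrow> ('n \<times> 't) set \<Rightarrow> 'n \<Rightarrow> 't list set" where
  "lang_from P2 P1 A = {yield t | t. valid_tree P2 P1 t \<and> root t = A}"

fun bin_prods :: "('n, 't) ptree \<Rightarrow> ('n \<times> 'n \<times> 'n) set" where
  "bin_prods (Leaf A a) = {}"
| "bin_prods (Node A l r) = insert (A, root l, root r) (bin_prods l \<union> bin_prods r)"

fun term_prods :: "('n, 't) ptree \<Rightarrow> ('n \<times> 't) set" where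
  "term_prods (Leaf A a) = {(A, a)}"
| "term_prods (Node A l r) = term_prods l \<union> term_prods r"

definition cnf_grammar ::
  "'n set \<Rightarrow> 't set \<Rightarrow> ('n \<times> 'n \<times> 'n) set \<Rightarrow> ('n \<times> 't) set \<Rightarrow> 'n \<Rightarrow> bool" where
  "cnf_grammar N T P2 P1 S \<longleftrightarrow>
     finite N \<and> S \<in> N \<and> finite P2 \<and> finite P1 \<and>
     (\<forall>(A, B, C) \<in> P2. A \<in> N \<and> B \<in> N \<and> C \<in> N) \<and>
     (\<forall>(A, a) \<in> P1. A \<in> N \<and> a \<in> T)"

definition grammar_trim ::
  "'n set \<Rightarrow> ('n \<times> 'n \<times> 'n) set \<Rightarrow> ('n \<times> 't) set \<Rightarrow> 'n \<Rightarrow> bool" where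
  "grammar_trim N P2 P1 S \<longleftrightarrow>
     (\<forall>p\<in>P2. \<exists>t. valid_tree P2 P1 t \<and> root t = S \<and> p \<in> bin_prods t) \<and>
     (\<forall>p\<in>P1. \<exists>t. valid_tree P2 P1 t \<and> root t = S \<and> p \<in> term_prods t) \<and>
     (\<forall>A\<in>N. (\<exists>B C. (A, B, C) \<in> P2 \<or> (B, A, C) \<in> P2 \<or> (B, C, A) \<in> P2) \<or>
            (\<exists>a. (A, a) \<in> P1))"

definition rank_zero :: "('n \<times> 'n \<times> 'n) set \<Rightarrow> ('n \<times> 't) set \<Rightarrow> 't \<Rightarrow> 'n \<Rightarrow> bool" where
  "rank_zero P2 P1 h A \<longleftrightarrow> (\<forall>w \<in> lang_from P2 P1 A. h \<notin> set w)"

end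

theory Submission
  imports Defs "HOL-Library.Sublist"
begin


lemma regular_on_finite_states:
  fixes Q :: "'s set" and \<delta> :: "'s \<Rightarrow> 'a \<Rightarrow> 's"
  assumes fin: "finite Q" and q0: "q0 \<in> Q" and cl: "\<forall>q\<in>Q. \<forall>a\<in>\<Sigma>. \<delta> q a \<in> Q" and Fs: "Fs \<subseteq> Q"
  shows "regular_on \<Sigma> {w \<in> lists \<Sigma>. foldl \<delta> q0 w \<in> Fs}"
proof -
  obtain f :: "'s \<Rightarrow> nat" and n where fQ: "f ` Q = {i. i < n}" and inj: "inj_on f Q"
    using finite_imp_inj_to_nat_seg[OF fin] by blast
  define g where "g = inv_into Q f"
  define \<delta>' where "\<delta>' = (\<lambda>i a. f (\<delta> (g i) a))"
  have gf: "q \<in> Q \<Longrightarrow> g (f q) = q" for q using inj by (simp add: g_def)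
  have clw: "q \<in> Q \<Longrightarrow> w \<in> lists \<Sigma> \<Longrightarrow> foldl \<delta> q w \<in> Q" for q w
    by (induction w arbitrary: q) (auto simp: cl)
  have sim: "q \<in> Q \<Longrightarrow> w \<in> lists \<Sigma> \<Longrightarrow> foldl \<delta>' (f q) w = f (foldl \<delta> q w)" for q w
    by (induction w arbitrary: q) (auto simp: \<delta>'_def gf cl)
  have pt: "foldl \<delta> q0 w \<in> Fs \<longleftrightarrow> foldl \<delta>' (f q0) w \<in> f ` Fs" if w: "w \<in> lists \<Sigma>" for w
  proof
    assume "foldl \<delta> q0 w \<in> Fs"
    then show "foldl \<delta>' (f q0) w \<in> f ` Fs" using sim[OF q0 w] by auto
  next
    assume "foldl \<delta>' (f q0) w \<in> f ` Fs"
    then obtain x where x: "x \<in> Fs" "f (foldl \<delta> q0 w) = f x" using sim[OF q0 w] by auto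
    have "foldl \<delta> q0 w = x" using inj_onD[OF inj x(2)] clw[OF q0 w] x(1) Fs by auto
    then show "foldl \<delta> q0 w \<in> Fs" using x by auto
  qed
  have eq: "{w \<in> lists \<Sigma>. foldl \<delta> q0 w \<in> Fs} = {w \<in> lists \<Sigma>. foldl \<delta>' (f q0) w \<in> f ` Fs}"
    using pt by blast
  have "finite (f ` Q)" using fin by simp
  moreover have "f q0 \<in> f ` Q" using q0 by simp
  moreover have "\<forall>i\<in>f ` Q. \<forall>a\<in>\<Sigma>. \<delta>' i a \<in> f ` Q" using cl gf by (auto simp: \<delta>'_def)
  moreover have "f ` Fs \<subseteq> f ` Q" using Fs by auto
  ultimately show ?thesis unfolding regular_on_def eq by blast
qed

definition lastn :: "nat \<Rightarrow> 'a list \<Rightarrow> 'a list" where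
  "lastn M xs = drop (length xs - M) xs"

lemma lastn_snoc: "lastn M (lastn M w @ [a]) = lastn M (w @ [a])"
  unfolding lastn_def by (cases "length w \<le> M") (auto simp: min_def Suc_diff_le)

lemma suffix_drop_iff: "length y + k \<le> length z \<Longrightarrow> suffix y (drop k z) \<longleftrightarrow> suffix y z"
  by (metis add_le_imp_le_diff length_drop suffix_drop suffix_length_suffix
    suffix_order.trans)

lemma suffix_lastn: "length y \<le> Suc M \<Longrightarrow> suffix y (lastn M w @ [a]) \<longleftrightarrow> suffix y (w @ [a])"
proof (cases "length w \<le> M")
  case True
  then show ?thesis by (simp add: lastn_def)
next
  case False
  assume l: "length y \<le> Suc M"
  have e: "lastn M w @ [a] = drop (length w - M) (w @ [a])"
    unfolding lastn_def using False by simp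
  show ?thesis unfolding e using l False by (intro suffix_drop_iff) simp
qed

lemma avoid_regular:
  assumes reg: "regular_on \<Sigma> R" and fin: "finite \<Sigma>" and lenF: "\<forall>y\<in>F. length y \<le> M"
    and nE: "[] \<notin> F"
  shows "regular_on \<Sigma> {u \<in> R. \<not> (\<exists>y\<in>F. sublist y u)}"
proof -
  obtain Q :: "nat set" and q0 \<delta> Fd where Q: "finite Q" "q0 \<in> Q" "\<forall>q\<in>Q. \<forall>a\<in>\<Sigma>. \<delta> q a \<in> Q" "Fd \<subseteq> Q"
    and R: "R = {w \<in> lists \<Sigma>. foldl \<delta> q0 w \<in> Fd}"
    using reg unfolding regular_on_def by blast
  define W where "W = {xs. set xs \<subseteq> \<Sigma> \<and> length xs \<le> M}"
  define St where "St = Q \<times> W \<times> (UNIV :: bool set)"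
  define st where "st = (\<lambda>(q, s, b) a. (\<delta> q a, lastn M (s @ [a]), b \<or> (\<exists>y\<in>F. suffix y (s @ [a]))))"
  define Fs where "Fs = {(q, s, b). q \<in> Fd \<and> s \<in> W \<and> \<not> b}"
  have clw: "q \<in> Q \<Longrightarrow> w \<in> lists \<Sigma> \<Longrightarrow> foldl \<delta> q w \<in> Q" for q w
    by (induction w arbitrary: q) (auto simp: Q)
  have lastnW: "s \<in> lists \<Sigma> \<Longrightarrow> lastn M s \<in> W" for s
    unfolding W_def lastn_def by (auto dest: in_set_dropD)
  have inv: "w \<in> lists \<Sigma> \<Longrightarrow> foldl st (q0, [], False) w = (foldl \<delta> q0 w, lastn M w, \<exists>y\<in>F. sublist y w)" for w
  proof (induction w rule: rev_induct)
    case Nil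
    then show ?case using nE by (simp add: lastn_def)
  next
    case (snoc a w)
    then have IH: "foldl st (q0, [], False) w = (foldl \<delta> q0 w, lastn M w, \<exists>y\<in>F. sublist y w)" by simp
    have "(\<exists>y\<in>F. sublist y w) \<or> (\<exists>y\<in>F. suffix y (lastn M w @ [a])) \<longleftrightarrow> (\<exists>y\<in>F. sublist y (w @ [a]))"
      using suffix_lastn lenF sublist_snoc by (metis le_SucI)
    then show ?case using IH by (simp add: st_def lastn_snoc)
  qed
  have eq: "{u \<in> R. \<not> (\<exists>y\<in>F. sublist y u)} = {w \<in> lists \<Sigma>. foldl st (q0, [], False) w \<in> Fs}"
  proof -
    have "foldl st (q0, [], False) w \<in> Fs \<longleftrightarrow> foldl \<delta> q0 w \<in> Fd \<and> \<not> (\<exists>y\<in>F. sublist y w)"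
      if "w \<in> lists \<Sigma>" for w
      using inv[OF that] lastnW[OF that] by (simp add: Fs_def)
    then show ?thesis unfolding R by blast
  qed
  show ?thesis unfolding eq
  proof (rule regular_on_finite_states)
    show "finite St" unfolding St_def W_def using Q(1) finite_lists_length_le[OF fin] by simp
    show "(q0, [], False) \<in> St" unfolding St_def W_def using Q by simp
    show "\<forall>q\<in>St. \<forall>a\<in>\<Sigma>. st q a \<in> St"
    proof (intro ballI)
      fix x a assume x: "x \<in> St" and a: "a \<in> \<Sigma>"
      obtain q s b where xs: "x = (q, s, b)" by (cases x)
      have "s @ [a] \<in> lists \<Sigma>" using x a xs by (auto simp: St_def W_def)
      then show "st x a \<in> St" using lastnW Q(3) x a xs by (auto simp: St_def st_def)
    qed
    show "Fs \<subseteq> St" unfolding Fs_def St_def using Q(4) by auto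
  qed
qed



lemma self_sub: "t \<in> subtrees t"
  by (cases t) auto

lemma sub_trans: "s \<in> subtrees t \<Longrightarrow> r \<in> subtrees s \<Longrightarrow> r \<in> subtrees t"
  by (induction t) auto

lemma valid_sub: "valid_tree P2 P1 t \<Longrightarrow> s \<in> subtrees t \<Longrightarrow> valid_tree P2 P1 s"
  by (induction t) auto

lemma yield_set: "\<forall>(A, a)\<in>P1. a \<in> T \<Longrightarrow> valid_tree P2 P1 t \<Longrightarrow> set (yield t) \<subseteq> T"
  by (induction t) auto

lemma root_N: "\<forall>(A, B, C)\<in>P2. A \<in> N \<Longrightarrow> \<forall>(A, a)\<in>P1. A \<in> N \<Longrightarrow> valid_tree P2 P1 t \<Longrightarrow> root t \<in> N"
  by (cases t) auto

lemma subst_tree: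
  "valid_tree P2 P1 t \<Longrightarrow> s \<in> subtrees t \<Longrightarrow> valid_tree P2 P1 s' \<Longrightarrow> root s' = root s \<Longrightarrow>
   \<exists>t' \<alpha> \<beta>. valid_tree P2 P1 t' \<and> root t' = root t \<and> yield t = \<alpha> @ yield s @ \<beta> \<and> yield t' = \<alpha> @ yield s' @ \<beta>"
proof (induction t)
  case (Leaf A a)
  then show ?case by (intro exI[of _ s'] exI[of _ "[]"]) auto
next
  case (Node A l r)
  show ?case
  proof (cases "s = Node A l r")
    case True
    then show ?thesis using Node.prems by (intro exI[of _ s'] exI[of _ "[]"]) auto
  next
    case False
    then have "s \<in> subtrees l \<or> s \<in> subtrees r" using Node.prems by auto
    then show ?thesis
    proof
      assume "s \<in> subtrees l"
      then obtain l' \<alpha> \<beta> where l': "valid_tree P2 P1 l'" "root l' = root l" "yield l = \<alpha> @ yield s @ \<beta>" "yield l' = \<alpha> @ yield s' @ \<beta>"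
        using Node by auto
      show ?thesis using Node.prems l'
        by (intro exI[of _ "Node A l' r"] exI[of _ \<alpha>] exI[of _ "\<beta> @ yield r"]) auto
    next
      assume "s \<in> subtrees r"
      then obtain r' \<alpha> \<beta> where r': "valid_tree P2 P1 r'" "root r' = root r" "yield r = \<alpha> @ yield s @ \<beta>" "yield r' = \<alpha> @ yield s' @ \<beta>"
        using Node by auto
      show ?thesis using Node.prems r'
        by (intro exI[of _ "Node A l r'"] exI[of _ "yield l @ \<alpha>"] exI[of _ \<beta>]) auto
    qed
  qed
qed

lemma subst_ctx:
  "valid_tree P2 P1 t \<Longrightarrow> s \<in> subtrees t \<Longrightarrow>
   \<exists>\<alpha> \<beta>. yield t = \<alpha> @ yield s @ \<beta> \<and>
     (\<forall>s'. valid_tree P2 P1 s' \<and> root s' = root s \<longrightarrow>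
        (\<exists>t'. valid_tree P2 P1 t' \<and> root t' = root t \<and> yield t' = \<alpha> @ yield s' @ \<beta>))"
proof (induction t)
  case (Leaf A a)
  then show ?case by (intro exI[of _ "[]"]) auto
next
  case (Node A l r)
  show ?case
  proof (cases "s = Node A l r")
    case True
    then show ?thesis using Node.prems by (intro exI[of _ "[]"]) auto
  next
    case False
    then have "s \<in> subtrees l \<or> s \<in> subtrees r" using Node.prems by auto
    then show ?thesis
    proof
      assume "s \<in> subtrees l"
      then obtain \<alpha> \<beta> where l': "yield l = \<alpha> @ yield s @ \<beta>"
        "\<forall>s'. valid_tree P2 P1 s' \<and> root s' = root s \<longrightarrow>
        (\<exists>t'. valid_tree P2 P1 t' \<and> root t' = root l \<and> yield t' = \<alpha> @ yield s' @ \<beta>)"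
        using Node by auto
      have e: "yield (Node A l r) = \<alpha> @ yield s @ (\<beta> @ yield r)" using l' by simp
      have "\<forall>s'. valid_tree P2 P1 s' \<and> root s' = root s \<longrightarrow>
        (\<exists>t'. valid_tree P2 P1 t' \<and> root t' = root (Node A l r) \<and> yield t' = \<alpha> @ yield s' @ (\<beta> @ yield r))"
      proof (intro allI impI)
        fix s' assume "valid_tree P2 P1 s' \<and> root s' = root s"
        then obtain l2 where "valid_tree P2 P1 l2 \<and> root l2 = root l \<and> yield l2 = \<alpha> @ yield s' @ \<beta>" using l' by blast
        then show "\<exists>t'. valid_tree P2 P1 t' \<and> root t' = root (Node A l r) \<and> yield t' = \<alpha> @ yield s' @ (\<beta> @ yield r)"
          using Node.prems by (intro exI[of _ "Node A l2 r"]) auto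
      qed
      then show ?thesis using e by blast
    next
      assume "s \<in> subtrees r"
      then obtain \<alpha> \<beta> where r': "yield r = \<alpha> @ yield s @ \<beta>"
        "\<forall>s'. valid_tree P2 P1 s' \<and> root s' = root s \<longrightarrow>
        (\<exists>t'. valid_tree P2 P1 t' \<and> root t' = root r \<and> yield t' = \<alpha> @ yield s' @ \<beta>)"
        using Node by auto
      have e: "yield (Node A l r) = (yield l @ \<alpha>) @ yield s @ \<beta>" using r' by simp
      have "\<forall>s'. valid_tree P2 P1 s' \<and> root s' = root s \<longrightarrow>
        (\<exists>t'. valid_tree P2 P1 t' \<and> root t' = root (Node A l r) \<and> yield t' = (yield l @ \<alpha>) @ yield s' @ \<beta>)"
      proof (intro allI impI)
        fix s' assume "valid_tree P2 P1 s' \<and> root s' = root s"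
        then obtain r2 where "valid_tree P2 P1 r2 \<and> root r2 = root r \<and> yield r2 = \<alpha> @ yield s' @ \<beta>" using r' by blast
        then show "\<exists>t'. valid_tree P2 P1 t' \<and> root t' = root (Node A l r) \<and> yield t' = (yield l @ \<alpha>) @ yield s' @ \<beta>"
          using Node.prems by (intro exI[of _ "Node A l r2"]) auto
      qed
      then show ?thesis using e by blast
    qed
  qed
qed

lemma descent:
  "1 \<le> K \<Longrightarrow> K < length (yield t) \<Longrightarrow> \<exists>s\<in>subtrees t. K < length (yield s) \<and> length (yield s) \<le> 2 * K"
proof (induction t)
  case (Leaf A a)
  then show ?case by simp
next
  case (Node A l r)
  show ?case
  proof (cases "K < length (yield l)")
    case True
    then show ?thesis using Node by auto
  next
    case F1: False
    show ?thesis
    proof (cases "K < length (yield r)")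
      case True
      then show ?thesis using Node by auto
    next
      case False
      then show ?thesis using Node.prems F1 by (intro bexI[of _ "Node A l r"]) auto
    qed
  qed
qed

lemma rank_zero_sub:
  assumes "rank_zero P2 P1 h (root s)" "valid_tree P2 P1 s" "s' \<in> subtrees s"
  shows "rank_zero P2 P1 h (root s')"
  unfolding rank_zero_def
proof
  fix z assume "z \<in> lang_from P2 P1 (root s')"
  then obtain tz where tz: "valid_tree P2 P1 tz" "root tz = root s'" "yield tz = z"
    unfolding lang_from_def by auto
  obtain t' \<alpha> \<beta> where t': "valid_tree P2 P1 t'" "root t' = root s" "yield t' = \<alpha> @ yield tz @ \<beta>"
    using subst_tree[OF assms(2,3) tz(1,2)] by blast
  have "\<alpha> @ z @ \<beta> = yield t'" using t' tz by simp
  then have "\<alpha> @ z @ \<beta> \<in> lang_from P2 P1 (root s)" unfolding lang_from_def using t' by blast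
  then show "h \<notin> set z" using assms(1) unfolding rank_zero_def by auto
qed

lemma sublist_hash:
  assumes "\<alpha> @ y @ \<beta> = u @ [h] @ r" "h \<notin> set y"
  shows "sublist y u \<or> sublist y r"
proof -
  obtain us where c: "(\<alpha> = u @ us \<and> us @ y @ \<beta> = [h] @ r) \<or> (\<alpha> @ us = u \<and> y @ \<beta> = us @ [h] @ r)"
    using assms(1) append_eq_append_conv2[of \<alpha> "y @ \<beta>" u "[h] @ r"] by blast
  then show ?thesis
  proof
    assume a: "\<alpha> = u @ us \<and> us @ y @ \<beta> = [h] @ r"
    show ?thesis
    proof (cases us)
      case Nil
      then show ?thesis using a assms(2) by (cases y) (auto simp: sublist_def)
    next
      case (Cons c us')
      then have "r = us' @ y @ \<beta>" using a by simp
      then show ?thesis by (auto simp: sublist_def)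
    qed
  next
    assume a: "\<alpha> @ us = u \<and> y @ \<beta> = us @ [h] @ r"
    then obtain zs where d: "(y = us @ zs \<and> zs @ \<beta> = [h] @ r) \<or> (y @ zs = us \<and> \<beta> = zs @ [h] @ r)"
      using append_eq_append_conv2[of y \<beta> us "[h] @ r"] by blast
    then show ?thesis
    proof
      assume b: "y = us @ zs \<and> zs @ \<beta> = [h] @ r"
      then have "zs = []" using assms(2) by (cases zs) auto
      then have "u = \<alpha> @ y @ []" using a b by simp
      then show ?thesis unfolding sublist_def by blast
    next
      assume b: "y @ zs = us \<and> \<beta> = zs @ [h] @ r"
      then have "u = \<alpha> @ y @ zs" using a by simp
      then show ?thesis by (auto simp: sublist_def)
    qed
  qed
qed


theorem lemma5p1:
  fixes G :: "('g, 'b) monoid_scheme"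
    and \<Sigma> :: "'a set" and iv :: "'a \<Rightarrow> 'a" and \<phi> :: "'a list \<Rightarrow> 'g"
    and h :: 'a and R :: "'a list set"
    and N :: "'n set" and P2 :: "('n \<times> 'n \<times> 'n) set" and P1 :: "('n \<times> 'a) set" and S :: 'n
  assumes gens: "choice_of_generators G \<Sigma> iv \<phi>"
    and hash: "h \<notin> \<Sigma>"
    and comb: "regular_combing G \<Sigma> \<phi> R"
    and cnf: "cnf_grammar N (insert h \<Sigma>) P2 P1 S"
    and gen_M: "lang_from P2 P1 S = word_problem_M G \<phi> h R"
    and trim: "grammar_trim N P2 P1 S"
  shows "\<exists>(K'::nat) R'. R' \<subseteq> R \<and> regular_combing G \<Sigma> \<phi> R' \<and>
           (\<forall>x \<in> word_problem_M G \<phi> h R \<inter> three_concat h R'.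
              \<exists>t. valid_tree P2 P1 t \<and> root t = S \<and> yield t = x \<and>
                  (\<forall>s \<in> subtrees t. rank_zero P2 P1 h (root s) \<longrightarrow> length (yield s) \<le> K'))"
proof -
  have grp: "group G" and finS: "finite \<Sigma>"
    and hom: "\<And>u v. u \<in> lists \<Sigma> \<Longrightarrow> v \<in> lists \<Sigma> \<Longrightarrow> \<phi> (u @ v) = \<phi> u \<otimes>\<^bsub>G\<^esub> \<phi> v"
    and img: "\<phi> ` lists \<Sigma> = carrier G"
    using gens unfolding choice_of_generators_def by auto
  have phiC: "u \<in> lists \<Sigma> \<Longrightarrow> \<phi> u \<in> carrier G" for u using img by blast
  have RS: "R \<subseteq> lists \<Sigma>" and regR: "regular_on \<Sigma> R" and imgR: "\<phi> ` R = carrier G"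
    using comb unfolding regular_combing_def by auto
  obtain Q :: "nat set" and q0 \<delta> Fd where Q: "finite Q" "q0 \<in> Q" "\<forall>q\<in>Q. \<forall>a\<in>\<Sigma>. \<delta> q a \<in> Q" "Fd \<subseteq> Q"
    and Rdef: "R = {w \<in> lists \<Sigma>. foldl \<delta> q0 w \<in> Fd}"
    using regR unfolding regular_on_def by blast
  have clw: "q \<in> Q \<Longrightarrow> w \<in> lists \<Sigma> \<Longrightarrow> foldl \<delta> q w \<in> Q" for q w
    by (induction w arbitrary: q) (auto simp: Q)
  have finN: "finite N" and P2N: "\<forall>(A, B, C)\<in>P2. A \<in> N" and P1N: "\<forall>(A, a)\<in>P1. A \<in> N"
    and P1T: "\<forall>(A, a)\<in>P1. a \<in> insert h \<Sigma>"
    using cnf unfolding cnf_grammar_def by auto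

  have Mval: "\<phi> (filter (\<lambda>c. c \<noteq> h) x) = \<one>\<^bsub>G\<^esub> \<and> x \<in> lists (insert h \<Sigma>)"
    if xM: "x \<in> word_problem_M G \<phi> h R" for x
  proof -
    obtain u v w where x: "x = u @ [h] @ v @ [h] @ w" and uvw: "u \<in> R" "v \<in> R" "w \<in> R"
      and one: "\<phi> u \<otimes>\<^bsub>G\<^esub> \<phi> v \<otimes>\<^bsub>G\<^esub> \<phi> w = \<one>\<^bsub>G\<^esub>"
      using xM unfolding word_problem_M_def by blast
    have L: "u \<in> lists \<Sigma>" "v \<in> lists \<Sigma>" "w \<in> lists \<Sigma>" using uvw RS by auto
    have fu: "filter (\<lambda>c. c \<noteq> h) z = z" if "z \<in> lists \<Sigma>" for z
      using that hash by (induction z) auto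
    have "filter (\<lambda>c. c \<noteq> h) x = u @ v @ w" using L by (simp add: x fu)
    moreover have "\<phi> (u @ v @ w) = \<phi> u \<otimes>\<^bsub>G\<^esub> \<phi> v \<otimes>\<^bsub>G\<^esub> \<phi> w"
      using L hom phiC group.is_monoid[OF grp] by (simp add: monoid.m_assoc)
    ultimately show ?thesis using one L x by auto
  qed

  define Rel where "Rel = {B. \<exists>t0 s0. valid_tree P2 P1 t0 \<and> root t0 = S \<and> s0 \<in> subtrees t0 \<and> root s0 = B \<and> rank_zero P2 P1 h B}"
  define L where "L = lang_from P2 P1"
  define tr where "tr = (\<lambda>y. restrict (\<lambda>q. foldl \<delta> q y) Q)"
  define Keys where "Keys = {(B, tr y) | B y. B \<in> Rel \<and> y \<in> L B}"
  define minlen where "minlen = (\<lambda>k. LEAST n. \<exists>y. y \<in> L (fst k) \<and> tr y = snd k \<and> length y = n)"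
  define K where "K = Suc (Max (minlen ` Keys))"
  define F where "F = {y. \<exists>B\<in>Rel. y \<in> L B \<and> K < length y \<and> length y \<le> 2 * K}"
  define R' where "R' = {u \<in> R. \<not> (\<exists>y\<in>F. sublist y u)}"

  have relS: "y \<in> lists \<Sigma> \<and> h \<notin> set y" if hyp: "B \<in> Rel" "y \<in> L B" for B y
  proof -
    obtain t where t: "valid_tree P2 P1 t" "root t = B" "yield t = y" using hyp(2) unfolding L_def lang_from_def by auto
    have "set y \<subseteq> insert h \<Sigma>" using yield_set[OF P1T t(1)] t by simp
    moreover have "h \<notin> set y" using hyp unfolding Rel_def rank_zero_def L_def by auto
    ultimately show ?thesis by auto
  qed
  have relN: "B \<in> N" if "B \<in> Rel" for B
    using that root_N[OF P2N P1N] valid_sub unfolding Rel_def by blast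
  have finKeys: "finite Keys"
  proof (rule finite_subset)
    show "Keys \<subseteq> N \<times> (Q \<rightarrow>\<^sub>E Q)"
      unfolding Keys_def tr_def using relN relS clw by auto
    show "finite (N \<times> (Q \<rightarrow>\<^sub>E Q))" using finN Q(1) by (simp add: finite_PiE)
  qed
  have short: "\<exists>y'. y' \<in> L B \<and> tr y' = tr y \<and> length y' < K" if "B \<in> Rel" "y \<in> L B" for B y
  proof -
    let ?P = "\<lambda>n. \<exists>z. z \<in> L B \<and> tr z = tr y \<and> length z = n"
    have "?P (minlen (B, tr y))" unfolding minlen_def fst_conv snd_conv
      by (rule LeastI_ex) (use that in blast)
    moreover have "(B, tr y) \<in> Keys" using that unfolding Keys_def by blast
    then have "minlen (B, tr y) \<le> Max (minlen ` Keys)" using finKeys by simp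
    ultimately show ?thesis unfolding K_def by fastforce
  qed
  have sameval: "\<phi> y = \<phi> y'" if hyp: "B \<in> Rel" "y \<in> L B" "y' \<in> L B" for B y y'
  proof -
    obtain t0 s0 where ts: "valid_tree P2 P1 t0" "root t0 = S" "s0 \<in> subtrees t0" "root s0 = B"
      using hyp(1) unfolding Rel_def by blast
    obtain \<alpha> \<beta> where ctx: "\<forall>s'. valid_tree P2 P1 s' \<and> root s' = root s0 \<longrightarrow>
        (\<exists>t'. valid_tree P2 P1 t' \<and> root t' = root t0 \<and> yield t' = \<alpha> @ yield s' @ \<beta>)"
      using subst_ctx[OF ts(1,3)] by blast
    have inM: "\<alpha> @ z @ \<beta> \<in> word_problem_M G \<phi> h R" if zL: "z \<in> L B" for z
    proof -
      obtain tz where tz: "valid_tree P2 P1 tz" "root tz = B" "yield tz = z" using zL unfolding L_def lang_from_def by auto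
      have "\<exists>t'. valid_tree P2 P1 t' \<and> root t' = root t0 \<and> yield t' = \<alpha> @ yield tz @ \<beta>"
        using ctx[rule_format, of tz] tz ts(4) by simp
      then obtain t' where t': "valid_tree P2 P1 t'" "root t' = S" "yield t' = \<alpha> @ z @ \<beta>" using ts(2) tz(3) by auto
      have "\<alpha> @ z @ \<beta> \<in> lang_from P2 P1 S" unfolding lang_from_def mem_Collect_eq
        by (rule exI[of _ t']) (use t' in simp)
      then show ?thesis using gen_M by simp
    qed
    have yS: "y \<in> lists \<Sigma>" "h \<notin> set y" "y' \<in> lists \<Sigma>" "h \<notin> set y'" using relS hyp by auto
    define fa where "fa = filter (\<lambda>c. c \<noteq> h) \<alpha>"
    define fb where "fb = filter (\<lambda>c. c \<noteq> h) \<beta>"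
    have ab: "\<alpha> \<in> lists (insert h \<Sigma>)" "\<beta> \<in> lists (insert h \<Sigma>)" using Mval[OF inM[OF hyp(2)]] by auto
    have fab: "fa \<in> lists \<Sigma>" "fb \<in> lists \<Sigma>" using ab by (auto simp: fa_def fb_def)
    have val: "\<phi> fa \<otimes>\<^bsub>G\<^esub> (\<phi> z \<otimes>\<^bsub>G\<^esub> \<phi> fb) = \<one>\<^bsub>G\<^esub>" if zz: "z \<in> lists \<Sigma>" "h \<notin> set z" "z \<in> L B" for z
    proof -
      have "filter (\<lambda>c. c \<noteq> h) z = z" using zz(2) by (induction z) auto
      then have "filter (\<lambda>c. c \<noteq> h) (\<alpha> @ z @ \<beta>) = fa @ z @ fb" by (simp add: fa_def fb_def)
      then have "\<phi> (fa @ z @ fb) = \<one>\<^bsub>G\<^esub>" using Mval[OF inM[OF zz(3)]] by simp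
      moreover have "\<phi> (fa @ z @ fb) = \<phi> fa \<otimes>\<^bsub>G\<^esub> (\<phi> z \<otimes>\<^bsub>G\<^esub> \<phi> fb)"
        using hom[of fa "z @ fb"] hom[of z fb] fab zz(1) by simp
      ultimately show ?thesis by simp
    qed
    have "\<phi> fa \<otimes>\<^bsub>G\<^esub> (\<phi> y \<otimes>\<^bsub>G\<^esub> \<phi> fb) = \<phi> fa \<otimes>\<^bsub>G\<^esub> (\<phi> y' \<otimes>\<^bsub>G\<^esub> \<phi> fb)"
      using val[OF yS(1,2) hyp(2)] val[OF yS(3,4) hyp(3)] by simp
    then have "\<phi> y \<otimes>\<^bsub>G\<^esub> \<phi> fb = \<phi> y' \<otimes>\<^bsub>G\<^esub> \<phi> fb"
    proof -
      have gm: "monoid G" using grp group.is_monoid by blast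
      have "\<phi> fa \<in> Units G" using group.Units_eq[OF grp] phiC fab by simp
      then show ?thesis using \<open>\<phi> fa \<otimes>\<^bsub>G\<^esub> (\<phi> y \<otimes>\<^bsub>G\<^esub> \<phi> fb) = \<phi> fa \<otimes>\<^bsub>G\<^esub> (\<phi> y' \<otimes>\<^bsub>G\<^esub> \<phi> fb)\<close>
          monoid.Units_l_cancel[OF gm] monoid.m_closed[OF gm] phiC fab yS by simp
    qed
    then show ?thesis using group.right_cancel[OF grp] phiC fab yS by simp
  qed
  have R'sub: "R' \<subseteq> R" by (auto simp: R'_def)
  have regR': "regular_on \<Sigma> R'" unfolding R'_def
    by (rule avoid_regular[OF regR finS, of F "2 * K"]) (auto simp: F_def)
  have surj: "\<phi> ` R' = carrier G"
  proof
    show "\<phi> ` R' \<subseteq> carrier G" using R'sub imgR by blast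
    show "carrier G \<subseteq> \<phi> ` R'"
    proof
      fix g assume g: "g \<in> carrier G"
      then obtain u0 where "u0 \<in> R \<and> \<phi> u0 = g" using imgR by (metis imageE)
      then obtain u where u: "u \<in> R \<and> \<phi> u = g" and umin: "\<forall>u'. u' \<in> R \<and> \<phi> u' = g \<longrightarrow> length u \<le> length u'"
        using ex_has_least_nat[of "\<lambda>u. u \<in> R \<and> \<phi> u = g" u0 length] by blast
      have "\<not> (\<exists>y\<in>F. sublist y u)"
      proof
        assume "\<exists>y\<in>F. sublist y u"
        then obtain y p q where yF: "y \<in> F" and up: "u = p @ y @ q" unfolding sublist_def by blast
        then obtain B where B: "B \<in> Rel" "y \<in> L B" "K < length y" unfolding F_def by blast
        obtain y' where y': "y' \<in> L B" "tr y' = tr y" "length y' < K" using short[OF B(1,2)] by blast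
        have yl: "y \<in> lists \<Sigma>" "y' \<in> lists \<Sigma>" using relS B y' by auto
        have pq: "p \<in> lists \<Sigma>" "q \<in> lists \<Sigma>" using u up unfolding Rdef by auto
        have st: "foldl \<delta> r y' = foldl \<delta> r y" if rQ: "r \<in> Q" for r
          using fun_cong[OF y'(2), of r] rQ by (simp add: tr_def)
        have "foldl \<delta> q0 (p @ y' @ q) = foldl \<delta> q0 u" using st[OF clw[OF Q(2) pq(1)]] up by simp
        then have inR: "p @ y' @ q \<in> R" using u up pq yl unfolding Rdef by auto
        have "\<phi> (p @ y' @ q) = \<phi> p \<otimes>\<^bsub>G\<^esub> (\<phi> y' \<otimes>\<^bsub>G\<^esub> \<phi> q)"
          using hom[of p "y' @ q"] hom[of y' q] pq yl by simp
        also have "\<dots> = \<phi> p \<otimes>\<^bsub>G\<^esub> (\<phi> y \<otimes>\<^bsub>G\<^esub> \<phi> q)" using sameval[OF B(1) y'(1) B(2)] by simp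
        also have "\<dots> = \<phi> u" using hom[of p "y @ q"] hom[of y q] pq yl up by simp
        finally have "p @ y' @ q \<in> R \<and> \<phi> (p @ y' @ q) = g" using inR u by simp
        then have "length u \<le> length (p @ y' @ q)" using umin by blast
        then show False using up y' B(3) by simp
      qed
      then have "u \<in> R'" using u unfolding R'_def by simp
      then show "g \<in> \<phi> ` R'" using u by blast
    qed
  qed
  have main: "\<forall>x \<in> word_problem_M G \<phi> h R \<inter> three_concat h R'.
              \<exists>t. valid_tree P2 P1 t \<and> root t = S \<and> yield t = x \<and>
                  (\<forall>s \<in> subtrees t. rank_zero P2 P1 h (root s) \<longrightarrow> length (yield s) \<le> 2 * K)"
  proof
    fix x assume x: "x \<in> word_problem_M G \<phi> h R \<inter> three_concat h R'"
    then have "x \<in> lang_from P2 P1 S" using gen_M by simp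
    then obtain t where t: "valid_tree P2 P1 t" "root t = S" "yield t = x" unfolding lang_from_def by blast
    obtain u v w where xuvw: "x = u @ [h] @ v @ [h] @ w" "u \<in> R'" "v \<in> R'" "w \<in> R'"
      using x unfolding three_concat_def by blast
    have "\<forall>s\<in>subtrees t. rank_zero P2 P1 h (root s) \<longrightarrow> length (yield s) \<le> 2 * K"
    proof (intro ballI impI, rule ccontr)
      fix s assume s: "s \<in> subtrees t" "rank_zero P2 P1 h (root s)" and long: "\<not> length (yield s) \<le> 2 * K"
      have "K < length (yield s)" using long by simp
      then obtain s' where s': "s' \<in> subtrees s" "K < length (yield s')" "length (yield s') \<le> 2 * K"
        using descent[of K s] unfolding K_def by auto
      have vs: "valid_tree P2 P1 s" using valid_sub t(1) s(1) by blast
      have s't: "s' \<in> subtrees t" using sub_trans s(1) s'(1) by blast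
      have rz: "rank_zero P2 P1 h (root s')" using rank_zero_sub[OF s(2) vs s'(1)] .
      have Rel: "root s' \<in> Rel" unfolding Rel_def using t s't rz by blast
      have vs': "valid_tree P2 P1 s'" using valid_sub t(1) s't by blast
      have yL: "yield s' \<in> L (root s')" unfolding L_def lang_from_def using vs' by blast
      have yF: "yield s' \<in> F" unfolding F_def using Rel yL s' by blast
      have hy: "h \<notin> set (yield s')" using relS Rel yL by blast
      obtain \<alpha> \<beta> where "yield t = \<alpha> @ yield s' @ \<beta>" using subst_ctx[OF t(1) s't] by blast
      then have eq: "\<alpha> @ yield s' @ \<beta> = u @ [h] @ (v @ [h] @ w)" using t xuvw by simp
      have "sublist (yield s') u \<or> sublist (yield s') (v @ [h] @ w)" using sublist_hash[OF eq hy] .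
      moreover have "sublist (yield s') v \<or> sublist (yield s') w" if sv: "sublist (yield s') (v @ [h] @ w)"
      proof -
        obtain \<alpha>' \<beta>' where "v @ [h] @ w = \<alpha>' @ yield s' @ \<beta>'" using sv unfolding sublist_def by blast
        then show ?thesis using sublist_hash[OF _ hy] by metis
      qed
      ultimately show False using xuvw yF unfolding R'_def by blast
    qed
    then show "\<exists>t. valid_tree P2 P1 t \<and> root t = S \<and> yield t = x \<and>
                  (\<forall>s \<in> subtrees t. rank_zero P2 P1 h (root s) \<longrightarrow> length (yield s) \<le> 2 * K)"
      using t by blast
  qed
  have "regular_combing G \<Sigma> \<phi> R'" unfolding regular_combing_def using R'sub RS regR' surj by blast
  then show ?thesis using R'sub main by blast
qed
end
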